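(* Let $c>1$ and $\Gamma=\{z\mapsto c^nz: n\in\mathbb{Z}\}$. A holomorphic function $F:G\to\mathbb{C}$ satisfies $F(c^nz,c^nw)=F(z,w)$ for all $(z,w)\in G$ and $n\in\mathbb{Z}$ if and only if there is an entire function $g$ with $F(z,w)=g\!\left(\frac{w}{z-w}\right)$ for all $(z,w)\in G$.
   Context: $\hat{\mathbb{C}}=\mathbb{C}\cup\{\infty\}$; $G=\hat{\mathbb{C}}^2\setminus\{(z,z):z\in\hat{\mathbb{C}}\}$. The map $(z,w)\mapsto w/(z-w)$ is understood as the holomorphic map $G\to\mathbb{C}$ obtained by continuous extension (value $0$ at $(\infty,w)$, value $-1$ at $(z,\infty)$); also $c^n\cdot\infty=\infty$. *)

theory Defs
  imports "HOL-Analysis.Analysis"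
begin

text \<open>The Riemann sphere: None plays the role of infinity.\<close>
type_synonym csphere = "complex option"

definition diagG :: "(csphere \<times> csphere) set" where
  "diagG = {(z, w). z \<noteq> w}"

definition chart_inv :: "bool \<Rightarrow> complex \<Rightarrow> csphere" where
  "chart_inv b u = (if b then (if u = 0 then None else Some (1 / u)) else Some u)"

definition holo2_on :: "(complex \<times> complex \<Rightarrow> complex) \<Rightarrow> (complex \<times> complex) set \<Rightarrow> bool" where
  "holo2_on f U \<longleftrightarrow> open U \<and>
     (\<forall>p\<in>U. \<exists>a b. (f has_derivative (\<lambda>(h, k). a * h + b * k)) (at p))"

text \<open>Holomorphy on G, the complex 2-manifold (sphere x sphere minus diagonal), via product charts.\<close>
definition holo_G :: "(csphere \<times> csphere \<Rightarrow> complex) \<Rightarrow> bool" where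
  "holo_G F \<longleftrightarrow> (\<forall>i j. holo2_on (\<lambda>(u, v). F (chart_inv i u, chart_inv j v))
                         {(u, v). (chart_inv i u, chart_inv j v) \<in> diagG})"

definition act :: "real \<Rightarrow> int \<Rightarrow> csphere \<Rightarrow> csphere" where
  "act c n z = map_option (\<lambda>x. (complex_of_real c powi n) * x) z"

text \<open>The map (z,w) maps to w/(z-w), continuously extended to G.\<close>
fun qmap :: "csphere \<Rightarrow> csphere \<Rightarrow> complex" where
  "qmap None w = 0"
| "qmap (Some z) None = -1"
| "qmap (Some z) (Some w) = w / (z - w)"

end

theory Submission
  imports Defs "HOL-Complex_Analysis.Complex_Analysis"
begin

lemma holo2_cont_at:
  assumes "holo2_on f U" "p \<in> U" shows "isCont f p"
  using assms unfolding holo2_on_def by (meson has_derivative_continuous)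

lemma holo2_chain:
  assumes "holo2_on f U" "(p t, q t) \<in> U"
    "(p has_field_derivative p') (at t)" "(q has_field_derivative q') (at t)"
  shows "(\<lambda>t. f (p t, q t)) field_differentiable (at t)"
proof -
  obtain a b where d: "(f has_derivative (\<lambda>(h, k). a * h + b * k)) (at (p t, q t))"
    using assms(1,2) unfolding holo2_on_def by blast
  have "((\<lambda>t. (p t, q t)) has_derivative (\<lambda>h. ((*) p' h, (*) q' h))) (at t)"
    by (intro has_derivative_Pair has_field_derivative_imp_has_derivative assms)
  from diff_chain_at[OF this d]
  have "((\<lambda>t. f (p t, q t)) has_derivative (\<lambda>h. (a * p' + b * q') * h)) (at t)"
    by (simp add: o_def algebra_simps)
  then show ?thesis
    unfolding field_differentiable_def has_field_derivative_def by blast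
qed

lemma exists_scale:
  fixes c r :: real assumes "c > 1" "r > 0"
  shows "\<exists>n::int. 1 \<le> c powi n * r \<and> c powi n * r \<le> c"
proof -
  define k where "k = \<lfloor>log c r\<rfloor>"
  have h: "c powr k \<le> r \<and> r < c powr (k + 1)"
    using floor_log_eq_powr_iff[OF assms(2,1)] k_def by blast
  have ck: "c powr k > 0" using assms by simp
  have e: "c powi (-k) = 1 / c powr k"
    using assms powr_real_of_int'[of c k] by (simp add: power_int_minus_divide)
  have "c powr (k+1) = c powr k * c" using assms by (simp add: powr_add)
  then have "1 \<le> c powi (-k) * r \<and> c powi (-k) * r \<le> c"
    using h ck unfolding e by (simp add: field_simps)
  then show ?thesis by blast
qed


lemma torus_const:
  fixes h :: "complex \<Rightarrow> complex" and c :: real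
  assumes c: "c > 1" and hol: "h holomorphic_on -{0}"
    and inv: "\<And>n z. z \<noteq> 0 \<Longrightarrow> h (of_real (c powi n) * z) = h z"
    and z: "z \<noteq> 0" and w: "w \<noteq> 0"
  shows "h z = h w"
proof -
  define K where "K = {z::complex. 1 \<le> norm z \<and> norm z \<le> c}"
  have "compact K"
  unfolding compact_eq_bounded_closed
  proof
    show "bounded K" unfolding K_def bounded_iff by blast
    have "closed ({z::complex. 1 \<le> norm z} \<inter> {z. norm z \<le> c})"
      by (intro closed_Int closed_Collect_le continuous_intros)
    then show "closed K" unfolding K_def by (simp add: Collect_conj_eq)
  qed
  moreover have "1 \<in> K" using c unfolding K_def by simp
  moreover have KS: "K \<subseteq> -{0}" unfolding K_def by auto
  moreover have "continuous_on K (\<lambda>z. norm (h z))"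
    using holomorphic_on_imp_continuous_on[OF hol] KS
    by (intro continuous_intros) (auto intro: continuous_on_subset)
  ultimately obtain \<xi> where xi: "\<xi> \<in> K" "\<And>y. y \<in> K \<Longrightarrow> norm (h y) \<le> norm (h \<xi>)"
    using continuous_attains_sup[of K "\<lambda>z. norm (h z)"] by blast
  have bound: "norm (h y) \<le> norm (h \<xi>)" if "y \<in> -{0}" for y
  proof -
    have "norm y > 0" using that by simp
    then obtain n where n: "1 \<le> c powi n * norm y" "c powi n * norm y \<le> c"
      using exists_scale[OF c] by blast
    have cp: "c powi n > 0" using c by simp
    have "norm (of_real (c powi n) * y) = c powi n * norm y"
      using cp c by (simp add: norm_mult norm_power_int)
    then have "of_real (c powi n) * y \<in> K" using n unfolding K_def by simp
    then have "norm (h (of_real (c powi n) * y)) \<le> norm (h \<xi>)" by (rule xi(2))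
    then show ?thesis using inv[of y n] that by simp
  qed
  have "h constant_on -{0}"
  proof (rule maximum_modulus_principle[OF hol _ _ _ order_refl])
    show "open (- {0::complex})" by auto
    show "connected (- {0::complex})" by (simp add: connected_punctured_universe)
    show "\<xi> \<in> - {0}" using xi KS by auto
  qed (use bound in auto)
  then show ?thesis using z w unfolding constant_on_def by auto
qed


lemma qmap_chart_cont:
  "continuous_on {(u, v). (chart_inv i u, chart_inv j v) \<in> diagG}
     (\<lambda>(u, v). qmap (chart_inv i u) (chart_inv j v))"
proof (cases i; cases j)
  assume "i" "j"
  have "continuous_on {(u, v). (chart_inv i u, chart_inv j v) \<in> diagG} (\<lambda>p::complex\<times>complex. fst p / (snd p - fst p))"
    by (intro continuous_intros) (auto simp: chart_inv_def diagG_def \<open>i\<close> \<open>j\<close> split: if_splits)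
  then show ?thesis
    by (rule continuous_on_eq) (auto simp: chart_inv_def diagG_def \<open>i\<close> \<open>j\<close> field_simps split: if_splits)
next
  assume "i" "\<not> j"
  have "continuous_on {(u, v). (chart_inv i u, chart_inv j v) \<in> diagG} (\<lambda>p::complex\<times>complex. fst p * snd p / (1 - fst p * snd p))"
    by (intro continuous_intros) (auto simp: chart_inv_def diagG_def \<open>i\<close> \<open>\<not> j\<close> field_simps split: if_splits)
  then show ?thesis
    by (rule continuous_on_eq) (auto simp: chart_inv_def diagG_def \<open>i\<close> \<open>\<not> j\<close> field_simps split: if_splits)
next
  assume "\<not> i" "j"
  have "continuous_on {(u, v). (chart_inv i u, chart_inv j v) \<in> diagG} (\<lambda>p::complex\<times>complex. 1 / (fst p * snd p - 1))"
    by (intro continuous_intros) (auto simp: chart_inv_def diagG_def \<open>\<not> i\<close> \<open>j\<close> field_simps split: if_splits)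
  then show ?thesis
    by (rule continuous_on_eq) (auto simp: chart_inv_def diagG_def \<open>\<not> i\<close> \<open>j\<close> field_simps split: if_splits)
next
  assume "\<not> i" "\<not> j"
  have "continuous_on {(u, v). (chart_inv i u, chart_inv j v) \<in> diagG} (\<lambda>p::complex\<times>complex. snd p / (fst p - snd p))"
    by (intro continuous_intros) (auto simp: chart_inv_def diagG_def \<open>\<not> i\<close> \<open>\<not> j\<close> split: if_splits)
  then show ?thesis
    by (rule continuous_on_eq) (auto simp: chart_inv_def diagG_def \<open>\<not> i\<close> \<open>\<not> j\<close> split: if_splits)
qed


lemma chart_inv_inj: "chart_inv i a = chart_inv i b \<Longrightarrow> a = b"
  by (auto simp: chart_inv_def split: if_splits)

lemma chart_inv_nz: "a \<noteq> 0 \<Longrightarrow> \<exists>x. chart_inv i a = Some x \<and> x \<noteq> 0"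
  by (auto simp: chart_inv_def)

lemma chart_inv_surj: "chart_inv (z = None) (case z of None \<Rightarrow> 0 | Some x \<Rightarrow> x) = z"
  by (cases z) (auto simp: chart_inv_def)

lemma act_Some: "act c n (Some x) = Some (complex_of_real c powi n * x)" and act_None: "act c n None = None"
  by (auto simp: act_def)

lemma qmap_act:
  assumes "c > 0" shows "qmap (act c n z) (act c n w) = qmap z w"
proof -
  have nz: "complex_of_real c powi n \<noteq> 0" using assms by simp
  show ?thesis
  proof (cases z; cases w)
    fix x y assume "z = Some x" "w = Some y"
    moreover have "(complex_of_real c powi n * y) / (complex_of_real c powi n * x - complex_of_real c powi n * y) = y / (x - y)"
      using nz by (simp only: right_diff_distrib[symmetric] mult_divide_mult_cancel_left_if) simp
    ultimately show ?thesis by (simp add: act_Some)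
  qed (auto simp: act_def)
qed

theorem mainTheorem13:
  fixes c :: real and F :: "csphere \<times> csphere \<Rightarrow> complex"
  assumes "c > 1" and "holo_G F"
  shows "(\<forall>z w n. (z, w) \<in> diagG \<longrightarrow> F (act c n z, act c n w) = F (z, w)) \<longleftrightarrow>
         (\<exists>g. g holomorphic_on UNIV \<and> (\<forall>z w. (z, w) \<in> diagG \<longrightarrow> F (z, w) = g (qmap z w)))"
proof
  assume inv: "\<forall>z w n. (z, w) \<in> diagG \<longrightarrow> F (act c n z, act c n w) = F (z, w)"
  define U where "U i j = {(u, v). (chart_inv i u, chart_inv j v) \<in> diagG}" for i j
  have holF: "holo2_on (\<lambda>(u, v). F (chart_inv i u, chart_inv j v)) (U i j)" for i j
    using assms(2) unfolding holo_G_def U_def by blast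
  define g where "g t = F (chart_inv True t, chart_inv True (1 + t))" for t
  have ghol: "g holomorphic_on UNIV"
    unfolding holomorphic_on_def
  proof
    fix t :: complex
    have mem: "(t, 1 + t) \<in> U True True"
      unfolding U_def diagG_def using chart_inv_inj[of True t "1 + t"] by auto
    have d: "((\<lambda>t. 1 + t) has_field_derivative 1) (at t)"
      by (auto intro!: derivative_eq_intros)
    have "g field_differentiable (at t)"
      using holo2_chain[where p="\<lambda>t. t" and q="\<lambda>t. 1 + t" and p'=1 and q'=1, OF holF[of True True] mem DERIV_ident d]
      unfolding g_def by simp
    then show "g field_differentiable (at t within UNIV)" by simp
  qed
  have key: "F (Some x, Some y) = g (y / (x - y))" if xy: "x \<noteq> 0" "y \<noteq> 0" "x \<noteq> y" for x y
  proof -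
    define s where "s = y / x"
    define t where "t = y / (x - y)"
    define h where "h l = F (Some l, Some (s * l))" for l
    have s1: "s \<noteq> 1" "s \<noteq> 0" using xy unfolding s_def by (auto simp: divide_simps)
    have t0: "t \<noteq> 0" "1 + t \<noteq> 0" using xy unfolding t_def by (auto simp: divide_simps)
    have hhol: "h holomorphic_on -{0}"
      unfolding holomorphic_on_def
    proof
      fix l :: complex assume "l \<in> -{0}"
      then have "(l, s * l) \<in> U False False"
        using s1 unfolding U_def diagG_def chart_inv_def by auto
      from holo2_chain[where p="\<lambda>t. t" and q="\<lambda>t. s * t" and p'=1 and q'=s, OF holF[of False False] this]
      have "h field_differentiable (at l)"
        unfolding h_def by (auto simp: chart_inv_def intro!: derivative_eq_intros)
      then show "h field_differentiable (at l within -{0})"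
        using field_differentiable_at_within by blast
    qed
    have hinv: "h (of_real (c powi n) * z) = h z" if "z \<noteq> 0" for n z
    proof -
      have "(Some z, Some (s * z)) \<in> diagG" using that s1 by (auto simp: diagG_def)
      then have "F (act c n (Some z), act c n (Some (s * z))) = F (Some z, Some (s * z))"
        using inv by blast
      then show ?thesis unfolding h_def by (simp add: act_Some mult.left_commute)
    qed
    have "h x = h (1 / t)"
      by (rule torus_const[OF assms(1) hhol hinv]) (use xy t0 in auto)
    moreover have "h x = F (Some x, Some y)" unfolding h_def s_def using xy by simp
    moreover have "g t = h (1 / t)"
    proof -
      have "1 / (1 + t) = s * (1 / t)"
        using xy t0 unfolding s_def t_def by (simp add: field_simps)
      then show ?thesis unfolding g_def h_def chart_inv_def using t0 by simp
    qed
    ultimately show ?thesis unfolding t_def by simp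
  qed
  have main: "F (chart_inv i u, chart_inv j v) = g (qmap (chart_inv i u) (chart_inv j v))"
    if uv: "(u, v) \<in> U i j" for i j u v
  proof -
    define \<Phi> where "\<Phi> = (\<lambda>(u, v). F (chart_inv i u, chart_inv j v))"
    define Q where "Q = (\<lambda>(u, v). qmap (chart_inv i u) (chart_inv j v))"
    define \<gamma> where "\<gamma> e = (u + e, v + e)" for e :: complex
    have t\<gamma>: "(\<gamma> \<longlongrightarrow> (u, v)) (at 0)"
    proof -
      have "((\<lambda>e. (u + e, v + e)) \<longlongrightarrow> (u + 0, v + 0)) (at (0::complex))"
        by (intro tendsto_intros)
      then show ?thesis unfolding \<gamma>_def by simp
    qed
    have opU: "open (U i j)" using holF[of i j] unfolding holo2_on_def by blast
    have ev1: "\<forall>\<^sub>F e in at 0. \<gamma> e \<in> U i j"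
      using topological_tendstoD[OF t\<gamma> opU uv] .
    have ev2: "\<forall>\<^sub>F e in at 0. e \<noteq> - u" "\<forall>\<^sub>F e in at 0. e \<noteq> - v"
      using eventually_neq_at_within by blast+
    have ev: "\<forall>\<^sub>F e in at 0. \<Phi> (\<gamma> e) = g (Q (\<gamma> e))"
      using ev1 ev2
    proof eventually_elim
      case (elim e)
      have "u + e \<noteq> 0" "v + e \<noteq> 0" using elim(2,3) by (auto simp: add_eq_0_iff)
      then obtain x y where xy: "chart_inv i (u + e) = Some x" "x \<noteq> 0"
        "chart_inv j (v + e) = Some y" "y \<noteq> 0"
        using chart_inv_nz by metis
      have "x \<noteq> y" using elim(1) xy unfolding U_def \<gamma>_def diagG_def by auto
      then show ?case using key[OF xy(2,4)] xy unfolding \<Phi>_def Q_def \<gamma>_def by simp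
    qed
    have c1: "isCont \<Phi> (u, v)" unfolding \<Phi>_def by (rule holo2_cont_at[OF holF uv])
    have "continuous_on (U i j) Q" unfolding Q_def U_def by (rule qmap_chart_cont)
    then have c2: "isCont Q (u, v)" using opU uv continuous_on_eq_continuous_at by blast
    have c3: "isCont g (Q (u, v))"
      using holomorphic_on_imp_continuous_on[OF ghol] continuous_on_eq_continuous_at by blast
    have l1: "((\<lambda>e. \<Phi> (\<gamma> e)) \<longlongrightarrow> \<Phi> (u, v)) (at 0)"
      by (rule isCont_tendsto_compose[OF c1 t\<gamma>])
    have l2: "((\<lambda>e. g (Q (\<gamma> e))) \<longlongrightarrow> g (Q (u, v))) (at 0)"
      by (rule isCont_tendsto_compose[OF c3 isCont_tendsto_compose[OF c2 t\<gamma>]])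
    have l3: "((\<lambda>e. \<Phi> (\<gamma> e)) \<longlongrightarrow> g (Q (u, v))) (at 0)"
      using Lim_transform_eventually[OF l2] ev by (simp add: eq_commute)
    have "\<Phi> (u, v) = g (Q (u, v))"
      using tendsto_unique[OF _ l1 l3] by simp
    then show ?thesis unfolding \<Phi>_def Q_def by simp
  qed
  show "\<exists>g. g holomorphic_on UNIV \<and> (\<forall>z w. (z, w) \<in> diagG \<longrightarrow> F (z, w) = g (qmap z w))"
  proof (intro exI[of _ g] conjI allI impI ghol)
    fix z w assume zw: "(z, w) \<in> diagG"
    let ?u = "case z of None \<Rightarrow> 0 | Some x \<Rightarrow> x" and ?v = "case w of None \<Rightarrow> 0 | Some x \<Rightarrow> x"
    have "(?u, ?v) \<in> U (z = None) (w = None)"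
      unfolding U_def using zw by (simp add: chart_inv_surj)
    from main[OF this] show "F (z, w) = g (qmap z w)" by (simp add: chart_inv_surj)
  qed
next
  assume "\<exists>g. g holomorphic_on UNIV \<and> (\<forall>z w. (z, w) \<in> diagG \<longrightarrow> F (z, w) = g (qmap z w))"
  then obtain g where g: "\<And>z w. (z, w) \<in> diagG \<Longrightarrow> F (z, w) = g (qmap z w)" by blast
  show "\<forall>z w n. (z, w) \<in> diagG \<longrightarrow> F (act c n z, act c n w) = F (z, w)"
  proof (intro allI impI)
    fix z w n assume zw: "(z, w) \<in> diagG"
    have nz: "complex_of_real c powi n \<noteq> 0" using assms(1) by simp
    have "(act c n z, act c n w) \<in> diagG"
      using zw nz by (cases z; cases w) (auto simp: diagG_def act_def)
    then show "F (act c n z, act c n w) = F (z, w)"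
      using g zw qmap_act assms(1) by simp
  qed
qed

end
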